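(* Let $L$ be a Lelek fan and let $C\subseteq L$ be a subcontinuum of $L$ that is a Cantor fan. Then $C$ is nowhere dense in $L$, i.e. $\mathrm{Int}_L(\mathrm{Cl}_L(C))=\emptyset$.
   Context: A continuum is a nonempty compact connected metric space. A dendroid is an arcwise connected, hereditarily unicoherent continuum. A point $x$ of a dendroid $X$ is a ramification point if $x$ is the top (the branch point) of some simple triod in $X$. A fan is a dendroid with at most one ramification point; this point, if it exists, is called the top of the fan. For a fan $X$, a point $x$ is an end point of $X$ if $x$ is an end point of every arc in $X$ containing $x$; $E(X)$ denotes the set of end points of $X$. A fan $X$ with top $v$ is smooth if for every $x\in X$ and every sequence $x_n\to x$ in $X$, the arcs from $v$ to $x_n$ converge (in the Hausdorff metric) to the arc from $v$ to $x$. A Lelek fan is a smooth fan $X$ with $\mathrm{Cl}(E(X))=X$. A Cantor fan is a continuum homeomorphic to $\bigcup_{c\in C}A_c\subseteq\mathbb R^2$, where $C\subseteq[0,1]$ is the Cantor middle-third set and $A_c$ is the straight segment from $(\tfrac12,0)$ to $(c,1)$. *)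

theory Defs
  imports "HOL-Analysis.Analysis"
begin

definition continuum :: "'a::metric_space set \<Rightarrow> bool" where
  "continuum X \<longleftrightarrow> X \<noteq> {} \<and> compact X \<and> connected X"

definition arc_between :: "'a::metric_space set \<Rightarrow> 'a \<Rightarrow> 'a \<Rightarrow> bool" where
  "arc_between A a b \<longleftrightarrow>
     (\<exists>g. arc g \<and> path_image g = A \<and> pathstart g = a \<and> pathfinish g = b)"

definition is_arc :: "'a::metric_space set \<Rightarrow> bool" where
  "is_arc A \<longleftrightarrow> (\<exists>a b. arc_between A a b)"

definition arcwise_connected :: "'a::metric_space set \<Rightarrow> bool" where
  "arcwise_connected X \<longleftrightarrow>
     (\<forall>x\<in>X. \<forall>y\<in>X. x \<noteq> y \<longrightarrow> (\<exists>A. A \<subseteq> X \<and> arc_between A x y))"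

definition hereditarily_unicoherent :: "'a::metric_space set \<Rightarrow> bool" where
  "hereditarily_unicoherent X \<longleftrightarrow>
     (\<forall>A B. A \<subseteq> X \<and> B \<subseteq> X \<and> continuum A \<and> continuum B \<longrightarrow> connected (A \<inter> B))"

definition dendroid :: "'a::metric_space set \<Rightarrow> bool" where
  "dendroid X \<longleftrightarrow> continuum X \<and> arcwise_connected X \<and> hereditarily_unicoherent X"

definition simple_triod_with_top :: "'a::metric_space set \<Rightarrow> 'a \<Rightarrow> bool" where
  "simple_triod_with_top T v \<longleftrightarrow>
     (\<exists>A1 A2 A3 a1 a2 a3.
        arc_between A1 v a1 \<and> arc_between A2 v a2 \<and> arc_between A3 v a3 \<and>
        A1 \<inter> A2 = {v} \<and> A1 \<inter> A3 = {v} \<and> A2 \<inter> A3 = {v} \<and>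
        T = A1 \<union> A2 \<union> A3)"

definition ramification_point :: "'a::metric_space set \<Rightarrow> 'a \<Rightarrow> bool" where
  "ramification_point X x \<longleftrightarrow> (\<exists>T. T \<subseteq> X \<and> simple_triod_with_top T x)"

definition fan :: "'a::metric_space set \<Rightarrow> bool" where
  "fan X \<longleftrightarrow> dendroid X \<and>
     (\<forall>x y. ramification_point X x \<and> ramification_point X y \<longrightarrow> x = y)"

definition end_points :: "'a::metric_space set \<Rightarrow> 'a set" where
  "end_points X = {x \<in> X. \<forall>A a b. A \<subseteq> X \<and> arc_between A a b \<and> x \<in> A \<longrightarrow> x = a \<or> x = b}"

definition hausdorff_dist :: "'a::metric_space set \<Rightarrow> 'a set \<Rightarrow> real" where
  "hausdorff_dist A B = max (SUP a\<in>A. setdist {a} B) (SUP b\<in>B. setdist {b} A)"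

text \<open>The arc from v to x in X (degenerate {v} when x = v); in a dendroid it is unique.\<close>
definition arc_in_from_to :: "'a::metric_space set \<Rightarrow> 'a \<Rightarrow> 'a \<Rightarrow> 'a set \<Rightarrow> bool" where
  "arc_in_from_to X v x A \<longleftrightarrow> A \<subseteq> X \<and> (if x = v then A = {v} else arc_between A v x)"

definition smooth_fan_with_top :: "'a::metric_space set \<Rightarrow> 'a \<Rightarrow> bool" where
  "smooth_fan_with_top X v \<longleftrightarrow> fan X \<and> ramification_point X v \<and>
     (\<forall>x s A As. x \<in> X \<and> (\<forall>n. s n \<in> X) \<and> s \<longlonglongrightarrow> x \<and>
        arc_in_from_to X v x A \<and> (\<forall>n. arc_in_from_to X v (s n) (As n))
        \<longrightarrow> (\<lambda>n. hausdorff_dist (As n) A) \<longlonglongrightarrow> 0)"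

definition lelek_fan :: "'a::metric_space set \<Rightarrow> bool" where
  "lelek_fan X \<longleftrightarrow> (\<exists>v. smooth_fan_with_top X v) \<and> closure (end_points X) = X"

definition cantor_set :: "real set" where
  "cantor_set = {x. \<exists>d::nat \<Rightarrow> nat. (\<forall>n. d n \<in> {0, 2}) \<and>
                        x = (\<Sum>n. real (d n) / 3 ^ (Suc n))}"

definition standard_cantor_fan :: "(real \<times> real) set" where
  "standard_cantor_fan = (\<Union>c\<in>cantor_set. closed_segment (1/2, 0) (c, 1))"

definition cantor_fan :: "'a::metric_space set \<Rightarrow> bool" where
  "cantor_fan X \<longleftrightarrow> X homeomorphic standard_cantor_fan"

end

theory Submission
  imports Defs
begin


lemma cs_summable: "(\<forall>n. d n \<in> {0::nat, 2}) \<Longrightarrow> summable (\<lambda>n. real (d n) / 3 ^ Suc n)"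
proof -
  assume h: "\<forall>n. d n \<in> {0::nat, 2}"
  have s: "summable (\<lambda>n. 2 * (1/3::real) ^ Suc n)"
    by (intro summable_mult summable_ignore_initial_segment[where k=1, simplified] summable_geometric) auto
  have le: "norm (real (d n) / 3 ^ Suc n) \<le> 2 * (1/3::real) ^ Suc n" for n
  proof -
    have "d n = 0 \<or> d n = 2" using h by blast
    then have "real (d n) \<le> 2" by auto
    then have "real (d n) / 3 ^ Suc n \<le> 2 / 3 ^ Suc n" by (intro divide_right_mono) auto
    then show ?thesis by (simp add: power_one_over)
  qed
  show ?thesis by (rule summable_comparison_test'[OF s le])
qed

lemma cs_two: "(\<Sum>n. 2 / (3::real) ^ Suc n) = 1"
proof -
  have "(\<lambda>n. (2/3) * (1/3::real) ^ n) sums ((2/3) * (1 / (1 - 1/3)))"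
    by (intro sums_mult geometric_sums) auto
  then show ?thesis by (simp add: power_divide sums_iff field_simps)
qed

lemma cs_bounds: assumes "x \<in> cantor_set" shows "0 \<le> x \<and> x \<le> 1"
proof -
  from assms obtain d where d: "\<forall>n. d n \<in> {0::nat,2}" "x = (\<Sum>n. real (d n) / 3 ^ Suc n)"
    unfolding cantor_set_def by auto
  have s: "summable (\<lambda>n. real (d n) / 3 ^ Suc n)" by (rule cs_summable[OF d(1)])
  have s2: "summable (\<lambda>n. 2 / (3::real) ^ Suc n)"
    using cs_summable[of "\<lambda>_. 2"] by simp
  have "x \<ge> 0" unfolding d(2) by (rule suminf_nonneg[OF s]) simp
  moreover have "x \<le> (\<Sum>n. 2 / (3::real) ^ Suc n)" unfolding d(2)
  proof (rule suminf_le[OF _ s s2])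
    fix n
    have "d n = 0 \<or> d n = 2" using d(1) by blast
    then have "real (d n) \<le> 2" by auto
    then show "real (d n) / 3 ^ Suc n \<le> 2 / 3 ^ Suc n" by (intro divide_right_mono) auto
  qed
  ultimately show ?thesis using cs_two by simp
qed

lemma cs_split: assumes "x \<in> cantor_set"
  shows "\<exists>y \<in> cantor_set. (x = y/3) \<or> (x = 2/3 + y/3)"
proof -
  from assms obtain d where d: "\<forall>n. d n \<in> {0::nat,2}" "x = (\<Sum>n. real (d n) / 3 ^ Suc n)"
    unfolding cantor_set_def by auto
  have s: "summable (\<lambda>n. real (d n) / 3 ^ Suc n)" by (rule cs_summable[OF d(1)])
  define y where "y = (\<Sum>n. real (d (Suc n)) / 3 ^ Suc n)"
  have yc: "y \<in> cantor_set" unfolding cantor_set_def y_def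
    by (rule CollectI, rule exI[of _ "\<lambda>n. d (Suc n)"]) (use d(1) in simp)
  have "(\<Sum>n. real (d (Suc n)) / 3 ^ Suc (Suc n)) = x - real (d 0) / 3"
    using suminf_split_head[OF s] d(2) by simp
  moreover have "(\<Sum>n. real (d (Suc n)) / 3 ^ Suc (Suc n)) = y / 3"
  proof -
    have "(\<lambda>n. real (d (Suc n)) / 3 ^ Suc (Suc n)) = (\<lambda>n. (1/3) * (real (d (Suc n)) / 3 ^ Suc n))"
      by auto
    moreover have sm: "summable (\<lambda>n. real (d (Suc n)) / 3 ^ Suc n)"
      using cs_summable[of "\<lambda>n. d (Suc n)"] d(1) by auto
    have "(\<Sum>n. (1/3) * (real (d (Suc n)) / 3 ^ Suc n)) = (1/3) * (\<Sum>n. real (d (Suc n)) / 3 ^ Suc n)"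
      by (rule suminf_mult[OF sm])
    ultimately show ?thesis unfolding y_def by (simp only:)
  qed
  ultimately have "x = real (d 0)/3 + y/3" by simp
  moreover have "d 0 = 0 \<or> d 0 = 2" using d(1) by blast
  ultimately show ?thesis using yc by auto
qed

lemma cs_gap: assumes "x \<in> cantor_set" shows "x \<le> 1/3 \<or> x \<ge> 2/3"
  using cs_split[OF assms] cs_bounds by force

lemma cs_scale1: assumes "x \<in> cantor_set" "x \<le> 1/3" shows "3*x \<in> cantor_set"
proof -
  obtain y where y: "y \<in> cantor_set" "x = y/3 \<or> x = 2/3 + y/3" using cs_split[OF assms(1)] by blast
  have "x = y/3" using y assms cs_bounds[OF y(1)] by auto
  then have "3*x = y" by simp
  then show ?thesis using y(1) by simp
qed

lemma cs_scale2: assumes "x \<in> cantor_set" "x \<ge> 2/3" shows "3*x - 2 \<in> cantor_set"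
proof -
  obtain y where y: "y \<in> cantor_set" "x = y/3 \<or> x = 2/3 + y/3" using cs_split[OF assms(1)] by blast
  have "x = 2/3 + y/3" using y assms cs_bounds[OF y(1)] by auto
  then show ?thesis using y(1) by simp
qed

lemma cs_no_interval_step:
  assumes "a < b" "{a..b} \<subseteq> cantor_set"
  shows "\<exists>a' b'. a' < b' \<and> b' - a' = 3 * (b - a) \<and> {a'..b'} \<subseteq> cantor_set"
proof (cases "a \<le> 1/3")
  case True
  have "b \<le> 1/3"
  proof (rule ccontr)
    assume "\<not> b \<le> 1/3"
    define m where "m = min ((1/3 + b)/2) (1/2)"
    have "m \<in> {a..b}" using True \<open>\<not> b \<le> 1/3\<close> by (auto simp: m_def min_def)
    then have "m \<in> cantor_set" using assms by auto
    then show False using cs_gap[of m] \<open>\<not> b \<le> 1/3\<close> by (auto simp: m_def min_def split: if_splits)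
  qed
  show ?thesis
  proof (intro exI conjI)
    show "{3*a..3*b} \<subseteq> cantor_set"
    proof
      fix z assume z: "z \<in> {3*a..3*b}"
      then have "z/3 \<in> cantor_set" "z/3 \<le> 1/3" using assms \<open>b \<le> 1/3\<close> by auto
      from cs_scale1[OF this] show "z \<in> cantor_set" by simp
    qed
  qed (use assms in auto)
next
  case False
  have "a \<in> cantor_set" using assms by auto
  then have "a \<ge> 2/3" using cs_gap False by auto
  show ?thesis
  proof (intro exI conjI)
    show "{3*a-2..3*b-2} \<subseteq> cantor_set"
    proof
      fix z assume z: "z \<in> {3*a-2..3*b-2}"
      then have zz: "(z+2)/3 \<in> cantor_set" "(z+2)/3 \<ge> 2/3" using assms \<open>a \<ge> 2/3\<close> by auto
      have "3*((z+2)/3) - 2 = z" by (simp add: field_simps)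
      with cs_scale2[OF zz] show "z \<in> cantor_set" by simp
    qed
  qed (use assms in auto)
qed

lemma cs_no_interval:
  assumes "a < b" "{a..b} \<subseteq> cantor_set"
  shows False
proof -
  have "\<exists>a' b'. a' < b' \<and> b' - a' = 3^n * (b - a) \<and> {a'..b'} \<subseteq> cantor_set" for n
  proof (induction n)
    case 0 then show ?case using assms by auto
  next
    case (Suc n)
    then obtain a' b' where "a' < b'" "b' - a' = 3^n * (b - a)" "{a'..b'} \<subseteq> cantor_set" by blast
    from cs_no_interval_step[OF this(1,3)] obtain a'' b'' where
      "a'' < b''" "b'' - a'' = 3 * (b' - a')" "{a''..b''} \<subseteq> cantor_set" by blast
    then show ?case using \<open>b' - a' = 3^n * (b - a)\<close>
      by (intro exI[of _ a''] exI[of _ b'']) (simp add: mult.assoc)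
  qed
  moreover obtain n where "1/(b-a) < 3^n" using real_arch_pow[of 3 "1/(b-a)"] by auto
  ultimately obtain a' b' where "a' < b'" "b' - a' = 3^n * (b - a)" "{a'..b'} \<subseteq> cantor_set" by blast
  then have "a' \<in> cantor_set" "b' \<in> cantor_set" by auto
  then have "b' - a' \<le> 1" using cs_bounds[of a'] cs_bounds[of b'] by linarith
  moreover have "1 < 3^n * (b-a)" using \<open>1/(b-a) < 3^n\<close> assms(1) by (simp add: field_simps)
  ultimately show False using \<open>b' - a' = 3^n * (b - a)\<close> by simp
qed

lemma cs_0: "0 \<in> cantor_set" unfolding cantor_set_def
  by (rule CollectI, rule exI[of _ "\<lambda>_. 0"]) auto
lemma cs_1: "1 \<in> cantor_set" unfolding cantor_set_def
  by (rule CollectI, rule exI[of _ "\<lambda>_. 2"]) (use cs_two in simp)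



lemma S_snd:
  assumes "p \<in> standard_cantor_fan" "snd p = 1" shows "fst p \<in> cantor_set"
proof -
  obtain c where c: "c \<in> cantor_set" "p \<in> closed_segment (1/2, 0) (c, 1)"
    using assms(1) unfolding standard_cantor_fan_def by blast
  then obtain u where u: "0 \<le> u" "u \<le> 1" "p = (1 - u) *\<^sub>R (1/2, 0) + u *\<^sub>R (c, 1)"
    unfolding in_segment by blast
  then have "u = 1" using assms(2) by simp
  then show ?thesis using u c by simp
qed

lemma S_arc:
  assumes "p \<in> standard_cantor_fan" "snd p \<noteq> 1"
  shows "\<exists>\<gamma>. arc \<gamma> \<and> path_image \<gamma> \<subseteq> standard_cantor_fan \<and> p \<in> path_image \<gamma> \<and>
            pathstart \<gamma> \<noteq> p \<and> pathfinish \<gamma> \<noteq> p"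
proof -
  obtain c where c: "c \<in> cantor_set" "p \<in> closed_segment (1/2, 0) (c, 1)"
    using assms(1) unfolding standard_cantor_fan_def by blast
  then obtain u where u: "0 \<le> u" "u \<le> 1" "p = (1 - u) *\<^sub>R (1/2, 0) + u *\<^sub>R (c, 1)"
    unfolding in_segment by blast
  have su: "snd p = u" using u by simp
  show ?thesis
  proof (cases "u = 0")
    case False
    let ?g = "linepath (1/2, 0::real) (c, 1)"
    have "arc ?g" by (rule arc_linepath) simp
    moreover have "path_image ?g \<subseteq> standard_cantor_fan"
      using c(1) unfolding standard_cantor_fan_def by auto
    moreover have "p \<in> path_image ?g" using c(2) by simp
    moreover have "pathstart ?g \<noteq> p" using su False by auto
    moreover have "pathfinish ?g \<noteq> p" using su assms(2) by auto
    ultimately show ?thesis by blast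
  next
    case True
    then have p: "p = (1/2, 0)" using u by simp
    define g where "g = (\<lambda>t::real. (t, \<bar>2*t - 1\<bar>))"
    have "path g" unfolding path_def g_def by (intro continuous_intros)
    moreover have "inj_on g {0..1}" unfolding g_def inj_on_def by auto
    ultimately have "arc g" by (simp add: arc_def)
    moreover have "path_image g \<subseteq> standard_cantor_fan"
    proof
      fix q assume "q \<in> path_image g"
      then obtain t where t: "0 \<le> t" "t \<le> 1" "q = (t, \<bar>2*t - 1\<bar>)"
        unfolding path_image_def g_def by auto
      show "q \<in> standard_cantor_fan"
      proof (cases "t \<le> 1/2")
        case True
        have "q \<in> closed_segment (1/2, 0) (0, 1)"
          unfolding in_segment
          by (rule exI[of _ "1 - 2*t"]) (use t True in auto)
        then show ?thesis using cs_0 unfolding standard_cantor_fan_def by blast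
      next
        case False
        have "q \<in> closed_segment (1/2, 0) (1, 1)"
          unfolding in_segment
          by (rule exI[of _ "2*t - 1"]) (use t False in \<open>auto simp: algebra_simps\<close>)
        then show ?thesis using cs_1 unfolding standard_cantor_fan_def by blast
      qed
    qed
    moreover have "p \<in> path_image g" unfolding path_image_def g_def p
      by (rule image_eqI[of _ _ "1/2"]) auto
    moreover have "pathstart g \<noteq> p" "pathfinish g \<noteq> p"
      unfolding pathstart_def pathfinish_def g_def p by auto
    ultimately show ?thesis by blast
  qed
qed

lemma E_C:
  assumes h: "homeomorphism C standard_cantor_fan f g" and x: "x \<in> end_points C"
  shows "snd (f x) = 1"
proof (rule ccontr)
  assume ne: "snd (f x) \<noteq> 1"
  have xC: "x \<in> C" using x unfolding end_points_def by blast
  have fx: "f x \<in> standard_cantor_fan" using h xC unfolding homeomorphism_def by blast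
  obtain \<gamma> where \<gamma>: "arc \<gamma>" "path_image \<gamma> \<subseteq> standard_cantor_fan" "f x \<in> path_image \<gamma>"
     "pathstart \<gamma> \<noteq> f x" "pathfinish \<gamma> \<noteq> f x"
    using S_arc[OF fx ne] by blast
  have gS: "continuous_on standard_cantor_fan g" "g ` standard_cantor_fan = C"
    "\<And>y. y \<in> standard_cantor_fan \<Longrightarrow> f (g y) = y" "g (f x) = x"
    using h xC unfolding homeomorphism_def by auto
  have injg: "inj_on g standard_cantor_fan" by (metis gS(3) inj_on_inverseI)
  have "arc (g \<circ> \<gamma>)"
  proof -
    have "path (g \<circ> \<gamma>)" using \<gamma> gS(1)
      by (intro path_continuous_image arc_imp_path) (auto elim: continuous_on_subset)
    moreover have "inj_on (g \<circ> \<gamma>) {0..1}"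
      using \<gamma>(1,2) injg unfolding arc_def path_image_def
      by (meson comp_inj_on inj_on_subset)
    ultimately show ?thesis by (simp add: arc_def)
  qed
  moreover have "path_image (g \<circ> \<gamma>) \<subseteq> C"
    using \<gamma>(2) gS(2) by (auto simp: path_image_compose)
  moreover have "x \<in> path_image (g \<circ> \<gamma>)"
    using \<gamma>(3) gS(4) unfolding path_image_compose by (metis image_eqI)
  moreover have "pathstart (g \<circ> \<gamma>) \<noteq> x"
    using \<gamma>(4) \<gamma>(2) gS(3) pathstart_in_path_image[of \<gamma>]
    by (metis pathstart_compose subsetD)
  moreover have "pathfinish (g \<circ> \<gamma>) \<noteq> x"
    using \<gamma>(5) \<gamma>(2) gS(3) pathfinish_in_path_image[of \<gamma>]
    by (metis pathfinish_compose subsetD)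
  ultimately show False using x unfolding end_points_def arc_between_def by blast
qed



theorem mainTheorem2:
  fixes L C :: "'a::metric_space set"
  assumes "lelek_fan L"
    and "C \<subseteq> L" and "continuum C" and "cantor_fan C"
  shows "(top_of_set L) interior_of ((top_of_set L) closure_of C) = {}"
proof -
  obtain v where sm: "smooth_fan_with_top L v" and cl: "closure (end_points L) = L"
    using assms(1) unfolding lelek_fan_def by blast
  have arcw: "arcwise_connected L" using sm
    unfolding smooth_fan_with_top_def fan_def dendroid_def by blast
  obtain T where T: "T \<subseteq> L" "simple_triod_with_top T v"
    using sm unfolding smooth_fan_with_top_def ramification_point_def by blast
  from T(2) obtain A1 A2 A3 a1 a2 a3 where tr: "arc_between A1 v a1" "T = A1 \<union> A2 \<union> A3"
    unfolding simple_triod_with_top_def by blast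
  then have A1: "arc_between A1 v a1" "A1 \<subseteq> L" using T(1) by auto
  then obtain g1 where g1: "arc g1" "path_image g1 = A1" "pathstart g1 = v" "pathfinish g1 = a1"
    unfolding arc_between_def by blast
  have va1: "v \<in> L" "a1 \<in> L" "v \<noteq> a1"
    using g1 A1(2) pathstart_in_path_image[of g1] pathfinish_in_path_image[of g1]
      arc_distinct_ends[OF g1(1)] by auto
  have cC: "compact C" using assms(3) unfolding continuum_def by blast
  then have clC: "closed C" by (rule compact_imp_closed)
  have "closedin (top_of_set L) C" using clC assms(2) by (simp add: closed_subset)
  then have clo: "(top_of_set L) closure_of C = C" by (rule closure_of_closedin)
  obtain f g where h: "homeomorphism C standard_cantor_fan f g"
    using assms(4) unfolding cantor_fan_def homeomorphic_def by blast
  have fcont: "continuous_on C f" and fS: "f ` C = standard_cantor_fan"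
    and gf: "\<And>x. x \<in> C \<Longrightarrow> g (f x) = x"
    using h unfolding homeomorphism_def by auto
  define K where "K = {p \<in> C. (snd \<circ> f) p = 1}"
  have clK: "closed K" unfolding K_def
    by (rule continuous_closed_preimage_constant[OF _ clC])
       (intro continuous_on_compose fcont continuous_intros)
  show ?thesis
  proof (rule ccontr)
    assume "(top_of_set L) interior_of ((top_of_set L) closure_of C) \<noteq> {}"
    then obtain x U where U: "openin (top_of_set L) U" "x \<in> U" "U \<subseteq> C"
      unfolding clo interior_of_def by blast
    then obtain V where V: "open V" "U = L \<inter> V" unfolding openin_open by blast
    have EK: "end_points L \<inter> V \<subseteq> K"
    proof
      fix e assume e: "e \<in> end_points L \<inter> V"
      then have eL: "e \<in> L" unfolding end_points_def by blast
      then have eC: "e \<in> C" using e V U by blast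
      have "e \<in> end_points C"
        using e eC assms(2) unfolding end_points_def by blast
      then show "e \<in> K" using E_C[OF h] eC unfolding K_def by auto
    qed
    have UK: "U \<subseteq> K"
    proof -
      have "U = V \<inter> closure (end_points L)" using V cl by blast
      also have "\<dots> \<subseteq> closure (V \<inter> end_points L)" by (rule open_Int_closure_subset[OF V(1)])
      also have "\<dots> \<subseteq> closure K" by (rule closure_mono) (use EK in blast)
      also have "\<dots> = K" using clK by simp
      finally show ?thesis .
    qed
    have xL: "x \<in> L" using U V by blast
    obtain y where y: "y \<in> L" "y \<noteq> x" using va1 by blast
    have xy: "x \<noteq> y" using y(2) by simp
    have "\<forall>x\<in>L. \<forall>y\<in>L. x \<noteq> y \<longrightarrow> (\<exists>A. A \<subseteq> L \<and> arc_between A x y)"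
      using arcw unfolding arcwise_connected_def by simp
    then have "\<exists>A. A \<subseteq> L \<and> arc_between A x y" using xL y(1) xy by blast
    then obtain A where A: "A \<subseteq> L" "arc_between A x y" by blast
    then obtain \<gamma> where \<gamma>: "arc \<gamma>" "path_image \<gamma> = A" "pathstart \<gamma> = x" "pathfinish \<gamma> = y"
      unfolding arc_between_def by blast
    have gcont: "continuous_on {0..1} \<gamma>" using \<gamma>(1) unfolding arc_def path_def by blast
    have ginj: "inj_on \<gamma> {0..1}" using \<gamma>(1) unfolding arc_def by blast
    obtain \<epsilon> where \<epsilon>: "\<epsilon> > 0" "ball x \<epsilon> \<subseteq> V" using V(1) U(2) V(2) open_contains_ball by blast
    have z: "(0::real) \<in> {0..1}" by simp
    have "\<forall>e>0. \<exists>d>0. \<forall>t\<in>{0..1}. dist t 0 < d \<longrightarrow> dist (\<gamma> t) (\<gamma> 0) < e"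
      using gcont z unfolding continuous_on_iff by blast
    then obtain d where d: "d > 0" "\<forall>t\<in>{0..1}. dist t 0 < d \<longrightarrow> dist (\<gamma> t) (\<gamma> 0) < \<epsilon>"
      using \<epsilon>(1) by blast
    define t0 where "t0 = min 1 (d/2)"
    have t0: "0 < t0" "t0 \<le> 1" "t0 < d" using d(1) by (auto simp: t0_def)
    have img: "\<gamma> ` {0..t0} \<subseteq> U"
    proof
      fix q assume "q \<in> \<gamma> ` {0..t0}"
      then obtain t where t: "t \<in> {0..t0}" "q = \<gamma> t" by blast
      have "dist (\<gamma> t) x < \<epsilon>" using d(2) t t0 \<gamma>(3) unfolding pathstart_def by auto
      then have "q \<in> V" using \<epsilon>(2) t(2) by (auto simp: dist_commute)
      moreover have "q \<in> L" using t t0 \<gamma>(2) A(1) unfolding path_image_def by auto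
      ultimately show "q \<in> U" using V(2) by blast
    qed
    define hh where "hh = (\<lambda>t. fst (f (\<gamma> t)))"
    have "continuous_on {0..t0} hh" unfolding hh_def
      apply (intro continuous_on_compose2[where f = fst and t = UNIV] continuous_intros)
        apply (rule continuous_on_compose2[OF fcont])
      using gcont t0 img U(3) by (auto elim: continuous_on_subset)
    then have conn: "connected (hh ` {0..t0})" by (intro connected_continuous_image) auto
    have sub: "hh ` {0..t0} \<subseteq> cantor_set"
    proof
      fix r assume "r \<in> hh ` {0..t0}"
      then obtain t where t: "t \<in> {0..t0}" "r = hh t" by blast
      then have "\<gamma> t \<in> K" using img UK by blast
      then have "\<gamma> t \<in> C" "snd (f (\<gamma> t)) = 1" unfolding K_def by auto
      then show "r \<in> cantor_set" using S_snd[of "f (\<gamma> t)"] fS t(2) hh_def by auto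
    qed
    have "\<gamma> 0 \<in> U" "\<gamma> t0 \<in> U" using img t0 by (auto simp: image_subset_iff)
    then have g0K: "\<gamma> 0 \<in> K" "\<gamma> t0 \<in> K" using UK by blast+
    have neq: "\<gamma> 0 \<noteq> \<gamma> t0" using ginj t0 unfolding inj_on_def by force
    have "hh 0 \<noteq> hh t0"
    proof
      assume "hh 0 = hh t0"
      then have "f (\<gamma> 0) = f (\<gamma> t0)" using g0K unfolding hh_def K_def by (auto intro: prod_eqI)
      then have "g (f (\<gamma> 0)) = g (f (\<gamma> t0))" by simp
      then show False using gf g0K neq unfolding K_def by auto
    qed
    moreover have "hh 0 \<in> hh ` {0..t0}" "hh t0 \<in> hh ` {0..t0}" using t0 by auto
    ultimately show False
    proof (cases "hh 0 < hh t0")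
      case True
      have "{hh 0..hh t0} \<subseteq> cantor_set"
        using connected_contains_Icc[OF conn \<open>hh 0 \<in> _\<close> \<open>hh t0 \<in> _\<close>] sub by blast
      then show False using cs_no_interval True by blast
    next
      case False
      then have lt: "hh t0 < hh 0" using \<open>hh 0 \<noteq> hh t0\<close> by simp
      have "{hh t0..hh 0} \<subseteq> cantor_set"
        using connected_contains_Icc[OF conn \<open>hh t0 \<in> _\<close> \<open>hh 0 \<in> _\<close>] sub by blast
      then show False using cs_no_interval lt by blast
    qed
  qed
qed

end
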